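(* A real number $\beta>1$ is a well-posed Salem number of degree 6 if and only if $\beta$ is the dominant root of a polynomial in $\mathbb Z[x]$ of the form $P(x)=x^6-ax^{5}-bx^{4}-cx^{3}-bx^{2}-ax+1$ (with $a,b,c\in\mathbb Z$) satisfying the following conditions: (1) $2-2b<2a+c$; (2) $c<2a$; (3) $|b+2|<c-a$.
   Context: A Salem number is an algebraic integer $>1$ all of whose conjugates have modulus not greater than one, with at least one conjugate of modulus one. For a sextic Salem number $\beta$ with minimal polynomial $P(x)=x^6-ax^{5}-bx^{4}-cx^{3}-bx^{2}-ax+1$, its trace polynomial is $Q(y)=y^3-ay^2-(b+3)y-(c-2a)=(y-\gamma)(y-\alpha_1)(y-\alpha_2)$, obtained by writing $P(x)/x^3=Q(y)$ with $y=x+x^{-1}$ (so $\gamma=\beta+1/\beta$). The Salem number $\beta$ is called well-posed if its trace polynomial $Q(y)$ has three roots $\gamma,\alpha_1,\alpha_2$ such that $-1<\alpha_1<0<\alpha_2<1<2<\gamma$. *)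

theory Defs
  imports "HOL-Analysis.Analysis" "HOL-Computational_Algebra.Polynomial"
begin

definition is_min_poly :: "real \<Rightarrow> rat poly \<Rightarrow> bool" where
  "is_min_poly x p \<longleftrightarrow> lead_coeff p = 1 \<and> irreducible p \<and> poly (map_poly of_rat p) x = 0"

definition conjugates :: "real \<Rightarrow> complex set" where
  "conjugates x = {z. \<exists>p. is_min_poly x p \<and> poly (map_poly of_rat p) z = 0}"

definition salem_number :: "real \<Rightarrow> bool" where
  "salem_number \<beta> \<longleftrightarrow> \<beta> > 1 \<and> algebraic_int \<beta> \<and>
     (\<forall>z\<in>conjugates \<beta>. z \<noteq> complex_of_real \<beta> \<longrightarrow> cmod z \<le> 1) \<and>
     (\<exists>z\<in>conjugates \<beta>. cmod z = 1)"

definition sextic_P :: "int \<Rightarrow> int \<Rightarrow> int \<Rightarrow> int poly" where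
  "sextic_P a b c = [:1, -a, -b, -c, -b, -a, 1:]"

definition trace_Q :: "int \<Rightarrow> int \<Rightarrow> int \<Rightarrow> int poly" where
  "trace_Q a b c = [:-(c - 2*a), -(b+3), -a, 1:]"

definition well_posed_salem6 :: "real \<Rightarrow> bool" where
  "well_posed_salem6 \<beta> \<longleftrightarrow> salem_number \<beta> \<and>
     (\<exists>a b c. is_min_poly \<beta> (map_poly of_int (sextic_P a b c)) \<and>
       (\<exists>\<gamma> \<alpha>1 \<alpha>2::real. \<gamma> = \<beta> + 1/\<beta> \<and>
          (\<forall>y. poly (map_poly of_int (trace_Q a b c)) y = (y - \<gamma>) * (y - \<alpha>1) * (y - \<alpha>2)) \<and>
          -1 < \<alpha>1 \<and> \<alpha>1 < 0 \<and> 0 < \<alpha>2 \<and> \<alpha>2 < 1 \<and> 1 < (2::real) \<and> 2 < \<gamma>))"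

definition dominant_root :: "real \<Rightarrow> int poly \<Rightarrow> bool" where
  "dominant_root x p \<longleftrightarrow> poly (map_poly of_int p) x = 0 \<and>
     (\<forall>z::complex. poly (map_poly of_int p) z = 0 \<longrightarrow> cmod z \<le> \<bar>x\<bar>)"

end

theory Submission
  imports Defs
begin

lemma P_eval: "poly (map_poly of_int (sextic_P a b c)) (z::'a::comm_ring_1) =
  1 - of_int a * z - of_int b*z^2 - of_int c * z^3 - of_int b * z^4 - of_int a * z^5 + z^6"
  by (simp add: sextic_P_def map_poly_pCons algebra_simps power_numeral_reduce)

lemma Q_eval: "poly (map_poly of_int (trace_Q a b c)) (z::'a::comm_ring_1) =
  z^3 - of_int a * z^2 - (of_int b + 3) * z - (of_int c - 2 * of_int a)"
  by (simp add: trace_Q_def map_poly_pCons algebra_simps power_numeral_reduce)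

lemma PQ: "(x::'a::field) \<noteq> 0 \<Longrightarrow> poly (map_poly of_int (sextic_P a b c)) x =
   x^3 * poly (map_poly of_int (trace_Q a b c)) (x + 1/x)"
  unfolding P_eval Q_eval by (simp add: field_simps power_numeral_reduce)

lemma posdef: fixes u w \<alpha> :: real assumes "\<alpha>^2 < 4" "u^2 + \<alpha>*u * w + w^2 = (0::real)" shows "u = 0 \<and> w = 0"
proof -
  have e: "4*(u^2 + \<alpha>*u * w + w^2) = (2*u+\<alpha> * w)^2 + (4-\<alpha>^2)*w^2" by (simp add: algebra_simps power2_eq_square)
  have "w = 0"
  proof (rule ccontr)
    assume "w \<noteq> 0" then have "0 < (4-\<alpha>^2)*w^2" using assms(1) by simp
    moreover have "0 \<le> (2*u+\<alpha> * w)^2" by simp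
    moreover have "(2*u+\<alpha> * w)^2 + (4-\<alpha>^2)*w^2 = 0" using e assms(2) by simp
    ultimately show False by linarith
  qed
  then show ?thesis using assms(2) by simp
qed

lemma unimod: fixes \<alpha> :: real and z :: complex
  assumes "\<alpha>^2 < 4" "z^2 - of_real \<alpha> * z + 1 = 0" shows "cmod z = 1"
proof -
  obtain x y where z: "z = Complex x y" by (cases z)
  from assms(2) have re: "x^2 - y^2 - \<alpha>*x + 1 = 0" and im: "2*x*y - \<alpha>*y = 0"
    by (simp_all add: z complex_eq_iff power2_eq_square)
  have "y \<noteq> 0"
  proof
    assume "y = 0"
    then have "(x - \<alpha>/2)^2 + (1 - \<alpha>^2/4) = 0" using re by (simp add: algebra_simps power2_eq_square)
    moreover have "0 \<le> (x - \<alpha>/2)^2" by simp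
    ultimately show False using assms(1) by linarith
  qed
  with im have a: "\<alpha> = 2*x" by (simp add: algebra_simps)
  have "x^2 + y^2 = 1" using re unfolding a by (simp add: algebra_simps power2_eq_square)
  then have "(cmod z)^2 = 1" by (simp add: z cmod_power2)
  then show ?thesis using norm_ge_zero[of z] by (auto simp: power2_eq_1_iff)
qed


lemma mpr_add: "map_poly (of_rat::rat\<Rightarrow>real) (p+q) = map_poly of_rat p + map_poly of_rat q"
  by (rule poly_eqI) (simp add: coeff_map_poly of_rat_add)
lemma mpr_diff: "map_poly (of_rat::rat\<Rightarrow>real) (p-q) = map_poly of_rat p - map_poly of_rat q"
  by (rule poly_eqI) (simp add: coeff_map_poly of_rat_diff)
lemma mpr_mult: "map_poly (of_rat::rat\<Rightarrow>real) (p*q) = map_poly of_rat p * map_poly of_rat q"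
  by (rule poly_eqI) (simp add: coeff_mult coeff_map_poly of_rat_sum of_rat_mult)
lemma mpr_int: "map_poly (of_rat::rat\<Rightarrow>'a::field_char_0) (map_poly of_int p) = map_poly of_int p"
  by (rule poly_eqI) (simp add: coeff_map_poly)

lemma poly_sum_le: "degree (p::'a::comm_semiring_1 poly) \<le> n \<Longrightarrow> poly p x = (\<Sum>i\<le>n. coeff p i * x^i)"
proof -
  assume "degree p \<le> n"
  have "poly p x = (\<Sum>i\<le>degree p. coeff p i * x^i)" by (rule poly_altdef)
  also have "\<dots> = (\<Sum>i\<le>n. coeff p i * x^i)"
    by (rule sum.mono_neutral_left) (use \<open>degree p \<le> n\<close> in \<open>auto simp: coeff_eq_0\<close>)
  finally show ?thesis .
qed

lemma eval_rat: "degree p \<le> n \<Longrightarrow> poly (map_poly (of_rat::rat\<Rightarrow>real) p) x = (\<Sum>i\<le>n. of_rat (coeff p i) * x^i)"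
  by (subst poly_sum_le[of _ n]) (auto intro: order.trans[OF map_poly_degree_leq] simp: coeff_map_poly)

lemma ident: fixes b2 p0 p1 p2 p3 p4 p5 X0 X1 X4 X5 B :: real
  shows "b2*(p0*X0 + p1*X1 + p2 + p3*B + p4*X4 + p5*X5) = p0*(b2*X0) + p1*(b2*X1) + p2*b2 + p3*(b2*B) + p4*(b2*X4) + p5*(b2*X5)"
  by (simp add: algebra_simps)

locale sal =
  fixes a b c :: int and \<beta> \<gamma> \<alpha>1 \<alpha>2 :: real
  assumes fac: "\<And>y. poly (map_poly of_int (trace_Q a b c)) y = (y - \<gamma>) * (y - \<alpha>1) * (y - \<alpha>2)"
  and r1: "-1 < \<alpha>1" and r2: "\<alpha>1 < 0" and r3: "0 < \<alpha>2" and r4: "\<alpha>2 < 1" and r5: "2 < \<gamma>"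
  and b1: "\<beta> > 1" and g: "\<gamma> = \<beta> + 1/\<beta>"
begin

lemma vieta: "of_int a = \<gamma>+\<alpha>1+\<alpha>2" "of_int b = -(\<gamma>*\<alpha>1+\<gamma>*\<alpha>2+\<alpha>1*\<alpha>2) - 3"
  "of_int c = \<gamma>*\<alpha>1*\<alpha>2 + 2*(\<gamma>+\<alpha>1+\<alpha>2)"
proof -
  have e0: "- (of_int c - 2 * of_int a) = - (\<gamma>*\<alpha>1*\<alpha>2)" using fac[of 0] by (simp add: Q_eval)
  have e1: "1 - of_int a - (of_int b + 3) - (of_int c - 2 * of_int a) = 1 - (\<gamma>+\<alpha>1+\<alpha>2) + (\<gamma>*\<alpha>1+\<gamma>*\<alpha>2+\<alpha>1*\<alpha>2) - \<gamma>*\<alpha>1*\<alpha>2"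
    using fac[of 1] by (simp add: Q_eval algebra_simps)
  have e2: "-1 - of_int a + (of_int b + 3) - (of_int c - 2 * of_int a) = -1 - (\<gamma>+\<alpha>1+\<alpha>2) - (\<gamma>*\<alpha>1+\<gamma>*\<alpha>2+\<alpha>1*\<alpha>2) - \<gamma>*\<alpha>1*\<alpha>2"
    using fac[of "-1"] by (simp add: Q_eval algebra_simps)
  show A: "of_int a = \<gamma>+\<alpha>1+\<alpha>2" "of_int b = -(\<gamma>*\<alpha>1+\<gamma>*\<alpha>2+\<alpha>1*\<alpha>2) - 3"
     using e0 e1 e2 by linarith+
  show "of_int c = \<gamma>*\<alpha>1*\<alpha>2 + 2*(\<gamma>+\<alpha>1+\<alpha>2)" using e0 A(1) by (simp add: algebra_simps)
qed

lemma conds: "2 - 2*b < 2*a + c \<and> c < 2*a \<and> \<bar>b + 2\<bar> < c - a"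
proof -
  have p1: "0 < (1+\<alpha>1)*(1+\<alpha>2)" using r1 r3 by simp
  have "(-1-\<gamma>)*(-1-\<alpha>1)*(-1-\<alpha>2) = -((1+\<gamma>)*((1+\<alpha>1)*(1+\<alpha>2)))" by (simp add: algebra_simps)
  also have "\<dots> < 0" using p1 r5 by simp
  finally have "real_of_int (a + b - c + 2) < 0" using fac[of "-1"] by (simp add: Q_eval algebra_simps)
  then have A: "a + b - c + 2 < 0" by linarith
  have p0: "\<alpha>1*\<alpha>2 < 0" using r2 r3 by (simp add: mult_neg_pos)
  have "0 < \<gamma>*(-(\<alpha>1*\<alpha>2))" using p0 r5 by (intro mult_pos_pos) auto
  then have "real_of_int (2*a - c) > 0" using fac[of 0] by (simp add: Q_eval algebra_simps)
  then have B: "c < 2*a" by linarith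
  have p2: "0 < (1-\<alpha>1)*(1-\<alpha>2)" using r2 r4 by simp
  have "(1-\<gamma>)*(1-\<alpha>1)*(1-\<alpha>2) = -((\<gamma>-1)*((1-\<alpha>1)*(1-\<alpha>2)))" by (simp add: algebra_simps)
  also have "\<dots> < 0" using p2 r5 by simp
  finally have "real_of_int (a - b - c - 2) < 0" using fac[of 1] by (simp add: Q_eval algebra_simps)
  then have C: "a - b - c - 2 < 0" by linarith
  have p3: "0 < (2-\<alpha>1)*(2-\<alpha>2)" using r2 r4 by simp
  have "(2-\<gamma>)*(2-\<alpha>1)*(2-\<alpha>2) = -((\<gamma>-2)*((2-\<alpha>1)*(2-\<alpha>2)))" by (simp add: algebra_simps)
  also have "\<dots> < 0" using p3 r5 by simp
  finally have "real_of_int (2 - 2*a - 2*b - c) < 0" using fac[of 2] by (simp add: Q_eval algebra_simps)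
  then have D: "2 - 2*a - 2*b - c < 0" by linarith
  show ?thesis using A B C D by linarith
qed

lemma bpos: "\<beta> > 0" using b1 by simp

lemma Pbeta: "poly (map_poly of_int (sextic_P a b c)) \<beta> = 0"
  using PQ[of \<beta> a b c] bpos fac[of \<gamma>] g by simp

lemma QC: "poly (map_poly of_int (trace_Q a b c)) (w::complex) = (w - of_real \<gamma>) * (w - of_real \<alpha>1) * (w - of_real \<alpha>2)"
proof -
  have ca: "(of_int a::complex) = of_real \<gamma> + of_real \<alpha>1 + of_real \<alpha>2"
    using arg_cong[OF vieta(1), of complex_of_real] by simp
  have cb: "(of_int b::complex) = -(of_real \<gamma>* of_real \<alpha>1+ of_real \<gamma>* of_real \<alpha>2+ of_real \<alpha>1* of_real \<alpha>2) - 3"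
    using arg_cong[OF vieta(2), of complex_of_real] by simp
  have cc: "(of_int c::complex) = of_real \<gamma>* of_real \<alpha>1* of_real \<alpha>2 + 2*(of_real \<gamma>+ of_real \<alpha>1+ of_real \<alpha>2)"
    using arg_cong[OF vieta(3), of complex_of_real] by simp
  show ?thesis unfolding Q_eval ca cb cc by (simp add: algebra_simps power_numeral_reduce)
qed

lemma croots: assumes "poly (map_poly of_int (sextic_P a b c)) (z::complex) = 0"
  shows "z = of_real \<beta> \<or> z = of_real (1/\<beta>) \<or> cmod z = 1"
proof -
  have z0: "z \<noteq> 0" using assms by (auto simp: P_eval)
  have "poly (map_poly of_int (trace_Q a b c)) (z + 1/z) = 0" using PQ[OF z0, of a b c] assms z0 by simp
  then have "z + 1/z = of_real \<gamma> \<or> z + 1/z = of_real \<alpha>1 \<or> z + 1/z = of_real \<alpha>2" unfolding QC by auto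
  moreover have "z^2 - of_real t * z + 1 = 0" if "z + 1/z = of_real t" for t
  proof -
    have "z * (z + 1/z) = z * of_real t" using that by simp
    then show ?thesis using z0 by (simp add: algebra_simps power2_eq_square)
  qed
  moreover have "z = of_real \<beta> \<or> z = of_real (1/\<beta>)" if "z^2 - of_real \<gamma> * z + 1 = 0"
  proof -
    have "(z - of_real \<beta>) * (z - of_real (1/\<beta>)) = z^2 - of_real \<gamma> * z + 1"
      using bpos unfolding g by (simp add: algebra_simps power2_eq_square of_real_def) 
    then show ?thesis using that by simp
  qed
  moreover have "\<alpha>1^2 < 4" "\<alpha>2^2 < 4"
  proof -
    have "\<alpha>1 * (\<alpha>1+1) < 0" using r1 r2 by (intro mult_neg_pos) auto
    then show "\<alpha>1^2 < 4" using r1 by (simp add: power2_eq_square algebra_simps)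
    have "\<alpha>2 * (\<alpha>2-1) < 0" using r3 r4 by (intro mult_pos_neg) auto
    then show "\<alpha>2^2 < 4" using r4 by (simp add: power2_eq_square algebra_simps)
  qed
  ultimately show ?thesis using unimod by blast
qed


abbreviation "QR \<equiv> (map_poly of_int (trace_Q a b c) :: rat poly)"

lemma QR_real: "of_rat (poly QR s) = poly (map_poly of_int (trace_Q a b c)) (of_rat s :: real)"
  by (simp add: Q_eval of_rat_add of_rat_mult of_rat_diff of_rat_power)

lemma NR: "poly QR s \<noteq> 0"
proof
  assume h: "poly QR s = 0"
  define x where "x = (of_rat s :: real)"
  have x0: "poly (map_poly of_int (trace_Q a b c)) x = 0" using QR_real[of s] h by (simp add: x_def)
  have "algebraic_int x" unfolding algebraic_int_altdef_ipoly
    using x0 by (intro exI[of _ "trace_Q a b c"]) (simp add: trace_Q_def)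
  moreover have "x \<in> \<rat>" by (simp add: x_def)
  ultimately have "x \<in> \<int>" by (rule rational_algebraic_int_is_int)
  then obtain n where n: "x = of_int n" by (elim Ints_cases)
  from x0 have "x = \<gamma> \<or> x = \<alpha>1 \<or> x = \<alpha>2" unfolding fac by auto
  moreover have "x \<noteq> \<alpha>1"
  proof
    assume "x = \<alpha>1" then have "-1 < n" "n < 0" using r1 r2 n by linarith+
    then show False by linarith
  qed
  moreover have "x \<noteq> \<alpha>2"
  proof
    assume "x = \<alpha>2" then have "0 < n" "n < 1" using r3 r4 n by linarith+
    then show False by linarith
  qed
  moreover have "x \<noteq> \<gamma>"
  proof
    assume xg: "x = \<gamma>"
    have "\<alpha>1*\<alpha>2 = of_int (-(b+3) - n*(a-n))"
      using vieta(1,2) xg n by (simp add: algebra_simps)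
    moreover have "\<alpha>1*\<alpha>2 < 0" using r2 r3 by (simp add: mult_neg_pos)
    moreover have "\<alpha>1 * (1 - \<alpha>2) < 0" using r2 r4 by (intro mult_neg_pos) auto
    then have "-1 < \<alpha>1*\<alpha>2" using r1 by (simp add: algebra_simps)
    ultimately have "-1 < -(b+3) - n*(a-n)" "-(b+3) - n*(a-n) < 0" by linarith+
    then show False by linarith
  qed
  ultimately show False by blast
qed

lemma N1: assumes "degree H \<le> 1" "poly (map_poly of_rat H) r = 0"
  "poly (map_poly of_int (trace_Q a b c)) r = (0::real)" shows "H = 0"
proof -
  have ev: "of_rat (coeff H 0) + of_rat (coeff H 1) * r = 0"
    using assms(2) eval_rat[OF assms(1), of r] by simp
  show ?thesis
  proof (cases "coeff H 1 = 0")
    case True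
    then have "coeff H 0 = 0" using ev by simp
    show ?thesis
    proof (rule poly_eqI)
      fix n show "coeff H n = coeff 0 n"
      proof (cases n)
        case (Suc k) then show ?thesis using True assms(1) by (cases k) (auto simp: coeff_eq_0)
      qed (use \<open>coeff H 0 = 0\<close> in auto)
    qed
  next
    case False
    define s where "s = - coeff H 0 / coeff H 1"
    have "r = of_rat s" using ev False by (simp add: s_def of_rat_divide of_rat_minus field_simps)
    then have "of_rat (poly QR s) = (0::real)" using QR_real[of s] assms(3) by simp
    then show ?thesis using NR by simp
  qed
qed

lemma N: assumes "degree H \<le> 2" "poly (map_poly of_rat H) r = 0"
  "poly (map_poly of_int (trace_Q a b c)) r = (0::real)" shows "H = 0"
proof (rule ccontr)
  assume H0: "H \<noteq> 0"
  show False
  proof (cases "degree H \<le> 1")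
    case True then show False using N1 assms H0 by blast
  next
    case False
    then have d2: "degree H = 2" using assms(1) by simp
    define M where "M = QR mod H"
    define D where "D = QR div H"
    have dm: "QR = D * H + M" by (simp add: M_def D_def)
    have "poly (map_poly of_rat QR) r = poly (map_poly of_rat D) r * poly (map_poly of_rat H) r + poly (map_poly of_rat M) r"
      by (subst dm) (simp add: mpr_add mpr_mult)
    then have Mr: "poly (map_poly of_rat M) r = 0" using assms(2,3) by (simp add: mpr_int)
    have "degree M \<le> 1" using degree_mod_less[OF H0, of QR] d2 unfolding M_def by auto
    then have M0: "M = 0" using N1 Mr assms(3) by blast
    have Q0: "QR \<noteq> 0" by (simp add: trace_Q_def map_poly_pCons)
    then have D0: "D \<noteq> 0" using dm M0 by auto
    have "degree QR = 3" by (simp add: trace_Q_def map_poly_pCons)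
    then have "degree D = 1" using dm M0 degree_mult_eq[OF D0 H0] d2 by simp
    define s where "s = - coeff D 0 / coeff D 1"
    have c1: "coeff D 1 \<noteq> 0" using \<open>degree D = 1\<close> D0 by (metis leading_coeff_0_iff)
    have "poly D s = coeff D 0 + coeff D 1 * s"
      using poly_sum_le[of D 1 s] \<open>degree D = 1\<close> by simp
    also have "\<dots> = 0" using c1 by (simp add: s_def)
    finally have "poly QR s = 0" using dm M0 by simp
    then show False using NR by simp
  qed
qed


lemma QRg: "poly (map_poly of_int (trace_Q a b c)) \<gamma> = (0::real)" "poly (map_poly of_int (trace_Q a b c)) \<alpha>1 = (0::real)"
  by (simp_all add: fac)

lemma al2: "\<alpha>1^2 < 4"
proof -
  have "\<alpha>1 * (\<alpha>1+1) < 0" using r1 r2 by (intro mult_neg_pos) auto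
  then show "\<alpha>1^2 < 4" using r1 by (simp add: power2_eq_square algebra_simps)
qed

lemma K: assumes "degree F \<le> 5" "poly (map_poly of_rat F) \<beta> = 0" shows "F = 0"
proof -
  define f where "f = (\<lambda>i. coeff F i)"
  define fr where "fr = (\<lambda>i. (of_rat (f i) :: real))"
  have ev: "fr 0 + fr 1 * \<beta> + fr 2 * \<beta>^2 + fr 3 * \<beta>^3 + fr 4 * \<beta>^4 + fr 5 * \<beta>^5 = 0"
    using assms(2) eval_rat[OF assms(1), of \<beta>] by (simp add: fr_def f_def eval_nat_numeral)
  define A where "A = [:f 2 - f 4 - f 0, f 1 - f 5, f 0:]"
  define B where "B = [:f 3 - f 1 - f 5, f 4 - f 0, f 5:]"
  have dA: "degree A \<le> 2" unfolding A_def
    by (rule order.trans[OF degree_pCons_le]) (simp add: order.trans[OF degree_pCons_le])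
  have dB: "degree B \<le> 2" unfolding B_def
    by (rule order.trans[OF degree_pCons_le]) (simp add: order.trans[OF degree_pCons_le])
  have eA: "poly (map_poly of_rat A) y = (fr 2 - fr 4 - fr 0) + (fr 1 - fr 5)*y + fr 0 * y^2" for y
    using eval_rat[OF dA, of y] by (simp add: A_def fr_def eval_nat_numeral of_rat_diff)
  have eB: "poly (map_poly of_rat B) y = (fr 3 - fr 1 - fr 5) + (fr 4 - fr 0)*y + fr 5 * y^2" for y
    using eval_rat[OF dB, of y] by (simp add: B_def fr_def eval_nat_numeral of_rat_diff)
  define u where "u = poly (map_poly of_rat A) \<gamma>"
  define v where "v = poly (map_poly of_rat B) \<gamma>"
  have "\<beta>^2 * (u + \<beta> * v) = fr 0 + fr 1 * \<beta> + fr 2 * \<beta>^2 + fr 3 * \<beta>^3 + fr 4 * \<beta>^4 + fr 5 * \<beta>^5"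
  proof -
    have x0: "\<beta>^2 * (\<gamma>^2 - 1 - \<beta>*\<gamma>) = 1" unfolding g using bpos by (simp add: field_simps power2_eq_square)
    have x1: "\<beta>^2 * (\<gamma> - \<beta>) = \<beta>" unfolding g using bpos by (simp add: field_simps power2_eq_square)
    have x4: "\<beta>^2 * (\<beta>*\<gamma> - 1) = \<beta>^4" unfolding g using bpos by (simp add: field_simps power2_eq_square power4_eq_xxxx)
    have x5: "\<beta>^2 * (\<beta>*(\<gamma>^2 - 1) - \<gamma>) = \<beta>^5" unfolding g using bpos
      by (simp add: field_simps power2_eq_square power_numeral_reduce)
    have d: "u + \<beta> * v = fr 0*(\<gamma>^2 - 1 - \<beta>*\<gamma>) + fr 1*(\<gamma> - \<beta>) + fr 2 + fr 3*\<beta> + fr 4*(\<beta>*\<gamma> - 1) + fr 5*(\<beta>*(\<gamma>^2 - 1) - \<gamma>)"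
      unfolding u_def v_def eA eB by (simp add: algebra_simps)
    have "\<beta>^2 * (u + \<beta> * v) = fr 0*(\<beta>^2 * (\<gamma>^2 - 1 - \<beta>*\<gamma>)) + fr 1*(\<beta>^2 * (\<gamma> - \<beta>)) + fr 2 * \<beta>^2 + fr 3*(\<beta>^2*\<beta>)
       + fr 4*(\<beta>^2 * (\<beta>*\<gamma> - 1)) + fr 5*(\<beta>^2 * (\<beta>*(\<gamma>^2 - 1) - \<gamma>))"
      unfolding d by (rule ident)
    also have "\<dots> = fr 0 + fr 1 * \<beta> + fr 2 * \<beta>^2 + fr 3 * \<beta>^3 + fr 4 * \<beta>^4 + fr 5 * \<beta>^5"
      unfolding x0 x1 x4 x5 by (simp add: power_numeral_reduce mult.commute)
    finally show ?thesis .
  qed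
  then have uv: "u = - \<beta> * v" using ev bpos by simp
  define R where "R = A*A + [:0,1:]*A*B + B*B"
  have eR: "poly (map_poly of_rat R) y = poly (map_poly of_rat A) y ^2 + y * poly (map_poly of_rat A) y * poly (map_poly of_rat B) y
     + poly (map_poly of_rat B) y ^2" for y :: real
    unfolding R_def mpr_add mpr_mult by (simp add: map_poly_pCons power2_eq_square)
  have Rg: "poly (map_poly of_rat R) \<gamma> = 0"
  proof -
    have "poly (map_poly of_rat R) \<gamma> = v^2 * (\<beta>^2 - \<gamma>*\<beta> + 1)"
      unfolding eR u_def[symmetric] v_def[symmetric] uv by (simp add: algebra_simps power2_eq_square)
    also have "\<beta>^2 - \<gamma>*\<beta> + 1 = 0" unfolding g using bpos by (simp add: field_simps power2_eq_square)
    finally show ?thesis by simp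
  qed
  have Q0: "QR \<noteq> 0" by (simp add: trace_Q_def map_poly_pCons)
  define M where "M = R mod QR"
  define D where "D = R div QR"
  have dm: "R = D * QR + M" unfolding M_def D_def by (rule div_mult_mod_eq[symmetric])
  have "degree QR = 3" by (simp add: trace_Q_def map_poly_pCons)
  then have dM: "degree M \<le> 2" using degree_mod_less[OF Q0, of R] unfolding M_def by auto
  have "poly (map_poly of_rat R) \<gamma> = poly (map_poly of_rat D) \<gamma> * poly (map_poly of_rat QR) \<gamma> + poly (map_poly of_rat M) \<gamma>"
    by (subst dm) (simp add: mpr_add mpr_mult)
  then have "poly (map_poly of_rat M) \<gamma> = 0" using Rg QRg by (simp add: mpr_int)
  then have M0: "M = 0" using N[OF dM _ QRg(1)] by blast
  have "poly (map_poly of_rat R) \<alpha>1 = poly (map_poly of_rat D) \<alpha>1 * poly (map_poly of_rat QR) \<alpha>1"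
    by (subst dm) (simp add: mpr_add mpr_mult M0)
  then have "poly (map_poly of_rat R) \<alpha>1 = 0" using QRg by (simp add: mpr_int)
  then have "poly (map_poly of_rat A) \<alpha>1 ^2 + \<alpha>1 * poly (map_poly of_rat A) \<alpha>1 * poly (map_poly of_rat B) \<alpha>1
     + poly (map_poly of_rat B) \<alpha>1 ^2 = 0" unfolding eR .
  then have "poly (map_poly of_rat A) \<alpha>1 = 0 \<and> poly (map_poly of_rat B) \<alpha>1 = 0"
    by (rule posdef[OF al2])
  then have "A = 0" "B = 0" using N[OF dA _ QRg(2)] N[OF dB _ QRg(2)] by auto
  then have z: "f 0 = 0" "f 1 = 0" "f 2 = 0" "f 3 = 0" "f 4 = 0" "f 5 = 0"
    unfolding A_def B_def by auto
  show "F = 0"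
  proof (rule poly_eqI)
    fix n :: nat
    have "n = 0 \<or> n = 1 \<or> n = 2 \<or> n = 3 \<or> n = 4 \<or> n = 5 \<or> n > 5" by arith
    then show "coeff F n = coeff 0 n" using z assms(1) by (auto simp: f_def coeff_eq_0)
  qed
qed


abbreviation "PR \<equiv> (map_poly of_int (sextic_P a b c) :: rat poly)"

lemma PR_deg: "degree PR = 6" and PR_lead: "lead_coeff PR = 1" and PR0: "PR \<noteq> 0"
  by (simp_all add: sextic_P_def map_poly_pCons)

lemma PR_beta: "poly (map_poly of_rat PR) \<beta> = 0"
  using Pbeta by (simp add: mpr_int)

lemma PR_irr: "irreducible PR"
proof (rule irreducibleI)
  show "PR \<noteq> 0" by (rule PR0)
  show "\<not> PR dvd 1" using PR_deg is_unit_iff_degree[OF PR0] by auto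
  fix F G assume FG: "PR = F * G"
  then have F0: "F \<noteq> 0" and G0: "G \<noteq> 0" using PR0 by auto
  have dsum: "degree F + degree G = 6" using degree_mult_eq[OF F0 G0] FG PR_deg by simp
  have "poly (map_poly of_rat F) \<beta> * poly (map_poly of_rat G) \<beta> = 0"
    using PR_beta unfolding FG mpr_mult by simp
  then consider "poly (map_poly of_rat F) \<beta> = 0" | "poly (map_poly of_rat G) \<beta> = 0" by auto
  then show "F dvd 1 \<or> G dvd 1"
  proof cases
    case 1
    have "\<not> degree F \<le> 5" using K[OF _ 1] F0 by blast
    then have "degree G = 0" using dsum by simp
    then show ?thesis using G0 is_unit_iff_degree by blast
  next
    case 2
    have "\<not> degree G \<le> 5" using K[OF _ 2] G0 by blast
    then have "degree F = 0" using dsum by simp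
    then show ?thesis using F0 is_unit_iff_degree by blast
  qed
qed

lemma PR_min: "is_min_poly \<beta> PR"
  unfolding is_min_poly_def using PR_lead PR_irr PR_beta by simp

lemma min_unique: assumes "is_min_poly \<beta> p" shows "p = PR"
proof -
  from assms have pl: "lead_coeff p = 1" and pi: "irreducible p" and pb: "poly (map_poly of_rat p) \<beta> = 0"
    unfolding is_min_poly_def by auto
  define M where "M = p mod PR"
  define D where "D = p div PR"
  have dm: "p = D * PR + M" unfolding M_def D_def by (rule div_mult_mod_eq[symmetric])
  have dM: "degree M \<le> 5" using degree_mod_less[OF PR0, of p] PR_deg unfolding M_def by auto
  have "poly (map_poly of_rat p) \<beta> = poly (map_poly of_rat D) \<beta> * poly (map_poly of_rat PR) \<beta> + poly (map_poly of_rat M) \<beta>"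
    by (subst dm) (simp add: mpr_add mpr_mult)
  then have "poly (map_poly of_rat M) \<beta> = 0" using pb PR_beta by simp
  then have M0: "M = 0" using K[OF dM] by blast
  then have pD: "p = PR * D" using dm by (simp add: mult.commute)
  from irreducibleD[OF pi pD] have "is_unit D"
    using PR_deg is_unit_iff_degree[OF PR0] by auto
  then have D00: "D \<noteq> 0" by auto
  with \<open>is_unit D\<close> have D0: "D \<noteq> 0" "degree D = 0" using is_unit_iff_degree[OF D00] by auto
  have "lead_coeff D = 1" using pl pD PR_lead by (simp add: lead_coeff_mult)
  then have "D = 1"
  proof -
    assume l: "lead_coeff D = 1"
    show "D = 1"
    proof (rule poly_eqI)
      fix n show "coeff D n = coeff 1 n"
        using l D0(2) by (cases n) (auto simp: coeff_eq_0)
    qed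
  qed
  then show ?thesis using pD by simp
qed

lemma conj_eq: "conjugates \<beta> = {z. poly (map_poly of_int (sextic_P a b c)) z = 0}"
proof (rule set_eqI)
  fix z :: complex
  show "z \<in> conjugates \<beta> \<longleftrightarrow> z \<in> {z. poly (map_poly of_int (sextic_P a b c)) z = 0}"
  proof
    assume "z \<in> conjugates \<beta>"
    then obtain p where p: "is_min_poly \<beta> p" "poly (map_poly of_rat p) z = 0" unfolding conjugates_def by blast
    from min_unique[OF p(1)] p(2) have "poly (map_poly of_rat PR) z = 0" by simp
    then show "z \<in> {z. poly (map_poly of_int (sextic_P a b c)) z = 0}" by (simp only: mpr_int mem_Collect_eq)
  next
    assume "z \<in> {z. poly (map_poly of_int (sextic_P a b c)) z = 0}"
    then have "poly (map_poly of_rat PR) z = 0" by (simp only: mpr_int mem_Collect_eq)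
    then show "z \<in> conjugates \<beta>" unfolding conjugates_def using PR_min by blast
  qed
qed

lemma unimod_root: "\<exists>z. poly (map_poly of_int (sextic_P a b c)) z = 0 \<and> cmod z = 1"
proof -
  define z where "z = Complex (\<alpha>1/2) (sqrt (1 - \<alpha>1^2/4))"
  have s: "sqrt (1 - \<alpha>1^2/4) ^ 2 = 1 - \<alpha>1^2/4" using al2 by simp
  define y where "y = sqrt (1 - \<alpha>1^2/4)"
  have yy: "y * y = 1 - \<alpha>1^2/4" using s by (simp add: y_def power2_eq_square)
  have e: "z^2 - of_real \<alpha>1 * z + 1 = 0"
  proof (rule complex_eqI)
    show "Re (z^2 - of_real \<alpha>1 * z + 1) = Re 0"
      unfolding z_def y_def[symmetric] using yy by (simp add: power2_eq_square algebra_simps)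
    show "Im (z^2 - of_real \<alpha>1 * z + 1) = Im 0"
      unfolding z_def y_def[symmetric] by (simp add: power2_eq_square algebra_simps)
  qed
  then have cz: "cmod z = 1" using unimod al2 by blast
  then have z0: "z \<noteq> 0" by auto
  have "z + 1/z - of_real \<alpha>1 = (z^2 - of_real \<alpha>1 * z + 1) / z" using z0 by (simp add: field_simps power2_eq_square)
  then have "z + 1/z - of_real \<alpha>1 = 0" using e by simp
  then have "poly (map_poly of_int (trace_Q a b c)) (z + 1/z) = 0" unfolding QC by simp
  then have "poly (map_poly of_int (sextic_P a b c)) z = 0" using PQ[OF z0, of a b c] by simp
  then show ?thesis using cz by blast
qed

lemma salem: "salem_number \<beta>"
  unfolding salem_number_def
proof (intro conjI)
  show "1 < \<beta>" by (rule b1)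
  show "algebraic_int \<beta>" unfolding algebraic_int_altdef_ipoly
    using Pbeta by (intro exI[of _ "sextic_P a b c"]) (simp add: sextic_P_def)
  show "\<forall>z\<in>conjugates \<beta>. z \<noteq> complex_of_real \<beta> \<longrightarrow> cmod z \<le> 1"
  proof (intro ballI impI)
    fix z assume z1: "z \<in> conjugates \<beta>" and z2: "z \<noteq> complex_of_real \<beta>"
    from z1 have "poly (map_poly of_int (sextic_P a b c)) z = 0" unfolding conj_eq by simp
    then have "z = of_real \<beta> \<or> z = of_real (1/\<beta>) \<or> cmod z = 1" by (rule croots)
    with z2 have "z = of_real (1/\<beta>) \<or> cmod z = 1" by blast
    moreover have "cmod (of_real (1/\<beta>)) \<le> 1" using b1 by (simp only: norm_of_real) simp
    ultimately show "cmod z \<le> 1" by auto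
  qed
  obtain z where "poly (map_poly of_int (sextic_P a b c)) z = 0" "cmod z = 1" using unimod_root by blast
  then show "\<exists>z\<in>conjugates \<beta>. cmod z = 1" unfolding conj_eq by blast
qed

lemma dom: "dominant_root \<beta> (sextic_P a b c)"
  unfolding dominant_root_def
proof (intro conjI allI impI)
  show "poly (map_poly of_int (sextic_P a b c)) \<beta> = 0" by (rule Pbeta)
  fix z :: complex assume "poly (map_poly of_int (sextic_P a b c)) z = 0"
  then have "z = of_real \<beta> \<or> z = of_real (1/\<beta>) \<or> cmod z = 1" by (rule croots)
  moreover have "cmod (of_real (1/\<beta>)) \<le> \<bar>\<beta>\<bar>" using b1 by (simp only: norm_of_real) (simp add: divide_le_eq less_1_mult less_imp_le)
  moreover have "cmod (of_real \<beta>) \<le> \<bar>\<beta>\<bar>" "1 \<le> \<bar>\<beta>\<bar>" using b1 by auto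
  ultimately show "cmod z \<le> \<bar>\<beta>\<bar>" by auto
qed

end

lemma cubic_fac: fixes r1 r2 r3 :: real
  assumes q1: "poly (map_poly of_int (trace_Q a b c)) r1 = 0"
      and q2: "poly (map_poly of_int (trace_Q a b c)) r2 = 0"
      and q3: "poly (map_poly of_int (trace_Q a b c)) r3 = 0"
      and d12: "r1 \<noteq> r2" and d13: "r1 \<noteq> r3" and d23: "r2 \<noteq> r3"
  shows "poly (map_poly of_int (trace_Q a b c)) y = (y - r1) * (y - r2) * (y - r3)"
proof -
  define d2 where "d2 = r1 + r2 + r3 - of_int a"
  define d1 where "d1 = -(of_int b + 3) - (r1*r2 + r1*r3 + r2*r3)"
  define d0 where "d0 = r1*r2*r3 - (of_int c - 2 * of_int a)"
  have D: "poly (map_poly of_int (trace_Q a b c)) x - (x - r1) * (x - r2) * (x - r3) = d2*x^2 + d1*x + d0" for x :: real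
    unfolding Q_eval d2_def d1_def d0_def by (simp add: algebra_simps power2_eq_square power3_eq_cube)
  have e1: "d2*r1^2 + d1*r1 + d0 = 0" using D[of r1] q1 by simp
  have e2: "d2*r2^2 + d1*r2 + d0 = 0" using D[of r2] q2 by simp
  have e3: "d2*r3^2 + d1*r3 + d0 = 0" using D[of r3] q3 by simp
  have "(r1 - r2) * (d2*(r1+r2) + d1) = 0" using e1 e2 by (simp add: algebra_simps power2_eq_square)
  then have f12: "d2*(r1+r2) + d1 = 0" using d12 by simp
  have "(r1 - r3) * (d2*(r1+r3) + d1) = 0" using e1 e3 by (simp add: algebra_simps power2_eq_square)
  then have f13: "d2*(r1+r3) + d1 = 0" using d13 by simp
  have "d2 * (r2 - r3) = (d2*(r1+r2) + d1) - (d2*(r1+r3) + d1)" by (simp add: algebra_simps)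
  then have "d2 * (r2 - r3) = 0" using f12 f13 by simp
  then have z2: "d2 = 0" using d23 by simp
  then have z1: "d1 = 0" using f12 by simp
  then have z0: "d0 = 0" using e1 z2 by simp
  show ?thesis using D[of y] z2 z1 z0 by simp
qed

theorem lemma4:
  fixes \<beta> :: real
  assumes "\<beta> > 1"
  shows "well_posed_salem6 \<beta> \<longleftrightarrow>
    (\<exists>a b c :: int. dominant_root \<beta> (sextic_P a b c) \<and>
       2 - 2*b < 2*a + c \<and> c < 2*a \<and> \<bar>b + 2\<bar> < c - a)"
proof
  assume "well_posed_salem6 \<beta>"
  then obtain a b c \<gamma> \<alpha>1 \<alpha>2 where
    h: "\<gamma> = \<beta> + 1/\<beta>" "\<forall>y. poly (map_poly of_int (trace_Q a b c)) y = (y - \<gamma>) * (y - \<alpha>1) * (y - \<alpha>2)"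
       "-1 < \<alpha>1" "\<alpha>1 < 0" "0 < \<alpha>2" "\<alpha>2 < 1" "2 < \<gamma>"
    unfolding well_posed_salem6_def by blast
  interpret sal a b c \<beta> \<gamma> \<alpha>1 \<alpha>2
    using h assms by unfold_locales auto
  show "\<exists>a b c :: int. dominant_root \<beta> (sextic_P a b c) \<and>
       2 - 2*b < 2*a + c \<and> c < 2*a \<and> \<bar>b + 2\<bar> < c - a" using dom conds by blast
next
  assume "\<exists>a b c :: int. dominant_root \<beta> (sextic_P a b c) \<and>
       2 - 2*b < 2*a + c \<and> c < 2*a \<and> \<bar>b + 2\<bar> < c - a"
  then obtain a b c :: int where dr: "dominant_root \<beta> (sextic_P a b c)"
     and c1: "2 - 2*b < 2*a + c" and c2: "c < 2*a" and c3: "\<bar>b + 2\<bar> < c - a" by blast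
  let ?Q = "map_poly of_int (trace_Q a b c) :: real poly"
  define \<gamma> where "\<gamma> = \<beta> + 1/\<beta>"
  have b0: "\<beta> \<noteq> 0" using assms by simp
  have "poly (map_poly of_int (sextic_P a b c)) \<beta> = 0" using dr unfolding dominant_root_def by blast
  then have Qg: "poly ?Q \<gamma> = 0" using PQ[OF b0, of a b c] b0 by (simp add: \<gamma>_def)
  have g2: "2 < \<gamma>"
  proof -
    have "0 < (\<beta> - 1)^2" using assms by simp
    then have "2 * \<beta> < \<beta> * \<beta> + 1" by (simp add: power2_eq_square algebra_simps)
    then have "2 < (\<beta> * \<beta> + 1) / \<beta>" using assms by (simp add: less_divide_eq)
    also have "\<dots> = \<gamma>" using b0 by (simp add: \<gamma>_def field_simps)
    finally show ?thesis .
  qed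
  have qm1: "poly ?Q (-1) = of_int (a + b - c + 2)" by (simp add: Q_eval)
  have q0: "poly ?Q 0 = of_int (2*a - c)" by (simp add: Q_eval)
  have q1: "poly ?Q 1 = of_int (a - b - c - 2)" by (simp add: Q_eval)
  have "poly ?Q (-1) < 0" unfolding qm1 using c3 by simp
  moreover have "0 < poly ?Q 0" unfolding q0 using c2 by simp
  ultimately obtain \<alpha>1 where a1: "-1 < \<alpha>1" "\<alpha>1 < 0" "poly ?Q \<alpha>1 = 0"
    using poly_IVT_pos[of "-1" 0 ?Q] by auto
  have "poly ?Q 1 < 0" unfolding q1 using c3 by simp
  then obtain \<alpha>2 where a2: "0 < \<alpha>2" "\<alpha>2 < 1" "poly ?Q \<alpha>2 = 0"
    using poly_IVT_neg[of 0 1 ?Q] \<open>0 < poly ?Q 0\<close> by auto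
  have fac: "\<forall>y. poly ?Q y = (y - \<gamma>) * (y - \<alpha>1) * (y - \<alpha>2)"
    using cubic_fac[OF Qg a1(3) a2(3)] a1 a2 g2 by auto
  interpret sal a b c \<beta> \<gamma> \<alpha>1 \<alpha>2
    using fac a1 a2 g2 assms \<gamma>_def by unfold_locales auto
  show "well_posed_salem6 \<beta>"
    unfolding well_posed_salem6_def
    apply (rule conjI[OF salem])
    apply (rule exI[of _ a], rule exI[of _ b], rule exI[of _ c])
    apply (rule conjI[OF PR_min])
    apply (rule exI[of _ \<gamma>], rule exI[of _ \<alpha>1], rule exI[of _ \<alpha>2])
    using fac a1 a2 g2 \<gamma>_def by auto
qed

end
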